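(* Let $X$, $Y_k$ ($k\in\mathbb N$) and norms $\|\cdot\|_{X\oplus Y_k}$ be as in the generalized $\ell^2$-sum setting, and let $k\in\mathbb N$. Then: (i) for $x\in X$, $y_k\in Y_k$: $\|x+y_k\|_\Sigma=\|x+y_k\|_{X\oplus Y_k}$; (ii) for $x^*\in X^*$, $y_k^*\in Y_k^*$: $\|x^*+y_k^*\|_\Sigma=\|x^*+y_k^*\|_{X\oplus Y_k}$, where the left side is the dual norm of $\|\cdot\|_\Sigma$; (iii) for $x^*\in X^*$: $\|x^*\|_\Sigma=\|x^*\|_X$.
   Context: Setting: $(X,\|\cdot\|_X)$ and $(Y_k,\|\cdot\|_{Y_k})$, $k\in\mathbb N$, are Banach spaces; for each $k$, $\|\cdot\|_{X\oplus Y_k}$ is a norm on $X\oplus Y_k$ coinciding with $\|\cdot\|_X$ on $X$ and with $\|\cdot\|_{Y_k}$ on $Y_k$, and monotone: $\|x+y_k\|_{X\oplus Y_k}\ge\|x\|_X$. Duals of direct sums are identified with direct sums of duals via $(x^*+y^* )(x+y)=x^*(x)+y^*(y)$ (so a functional on a summand is regarded as a functional on the whole sum, vanishing on the other summands). $\Lambda(X\oplus Y_k)$ is the set of functionals $x^*+\sum_k\alpha_ky_k^*$ with $x^*\in X^*$, $y_k^*\in Y_k^*$, $\|x^*+y_k^*\|_{X\oplus Y_k}\le1$ for all $k$, $0\le\alpha_k\le1$, $\sum\alpha_k^2\le1$. $\Sigma(X\oplus Y_k)=\{x+y_1+y_2+\dots:x\in X,y_k\in Y_k,\sum\|y_k\|_{Y_k}^2<\infty\}$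 with $\|z\|_\Sigma=\sup\{|z^*(z)|:z^*\in\Lambda(X\oplus Y_k)\}$; the dual norm is also denoted $\|\cdot\|_\Sigma$. *)

theory Defs
  imports "HOL-Analysis.Analysis"
begin

text \<open>The spaces Y_k are linear subspaces Y k of a common ambient real vector space 'y,
  each equipped with its own norm ny k (complete on Y k). The norm on X (+) Y_k is
  a function N k on pairs (x,y) with y in Y k.\<close>

definition is_norm_on :: "'a::real_vector set \<Rightarrow> ('a \<Rightarrow> real) \<Rightarrow> bool" where
  "is_norm_on S n \<longleftrightarrow>
     (\<forall>x\<in>S. 0 \<le> n x) \<and> (\<forall>x\<in>S. n x = 0 \<longleftrightarrow> x = 0) \<and>
     (\<forall>x\<in>S. \<forall>c. n (c *\<^sub>R x) = \<bar>c\<bar> * n x) \<and>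
     (\<forall>x\<in>S. \<forall>y\<in>S. n (x + y) \<le> n x + n y)"

definition complete_on :: "'a::real_vector set \<Rightarrow> ('a \<Rightarrow> real) \<Rightarrow> bool" where
  "complete_on S n \<longleftrightarrow>
     (\<forall>f. (\<forall>i. f i \<in> S) \<and> (\<forall>e>0. \<exists>M. \<forall>i\<ge>M. \<forall>j\<ge>M. n (f i - f j) < e)
          \<longrightarrow> (\<exists>l\<in>S. (\<lambda>i. n (f i - l)) \<longlonglongrightarrow> 0))"

definition linear_on :: "'a::real_vector set \<Rightarrow> ('a \<Rightarrow> real) \<Rightarrow> bool" where
  "linear_on S f \<longleftrightarrow>
     (\<forall>x\<in>S. \<forall>y\<in>S. \<forall>a b. f (a *\<^sub>R x + b *\<^sub>R y) = a * f x + b * f y)"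

definition bounded_functional_on :: "'a::real_vector set \<Rightarrow> ('a \<Rightarrow> real) \<Rightarrow> ('a \<Rightarrow> real) \<Rightarrow> bool" where
  "bounded_functional_on S n f \<longleftrightarrow> linear_on S f \<and> (\<exists>C. \<forall>x\<in>S. \<bar>f x\<bar> \<le> C * n x)"

definition dual_norm :: "'a set \<Rightarrow> ('a \<Rightarrow> real) \<Rightarrow> ('a \<Rightarrow> real) \<Rightarrow> real" where
  "dual_norm S n f = Sup {\<bar>f z\<bar> | z. z \<in> S \<and> n z \<le> 1}"

definition l2sum_setting ::
  "(nat \<Rightarrow> 'y::real_vector set) \<Rightarrow> (nat \<Rightarrow> 'y \<Rightarrow> real) \<Rightarrow> (nat \<Rightarrow> ('x::banach \<times> 'y) \<Rightarrow> real) \<Rightarrow> bool" where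
  "l2sum_setting Y ny N \<longleftrightarrow>
     (\<forall>k. subspace (Y k) \<and> is_norm_on (Y k) (ny k) \<and> complete_on (Y k) (ny k)) \<and>
     (\<forall>k. is_norm_on (UNIV \<times> Y k) (N k)) \<and>
     (\<forall>k. \<forall>x. N k (x, 0) = norm x) \<and>
     (\<forall>k. \<forall>y\<in>Y k. N k (0, y) = ny k y) \<and>
     (\<forall>k. \<forall>x. \<forall>y\<in>Y k. norm x \<le> N k (x, y))"

text \<open>Sigma(X (+) Y_k): x + y_1 + y_2 + ... represented by the pair (x, (y_k)_k).\<close>
definition SigmaSp :: "(nat \<Rightarrow> 'y::real_vector set) \<Rightarrow> (nat \<Rightarrow> 'y \<Rightarrow> real) \<Rightarrow> ('x \<times> (nat \<Rightarrow> 'y)) set" where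
  "SigmaSp Y ny = {(x, ys). (\<forall>k. ys k \<in> Y k) \<and> summable (\<lambda>k. (ny k (ys k))\<^sup>2)}"

text \<open>Lambda(X (+) Y_k): x* + sum_k alpha_k y_k*, represented by the triple (x*, (y_k*)_k, alpha).\<close>
definition LambdaSet ::
  "(nat \<Rightarrow> 'y::real_vector set) \<Rightarrow> (nat \<Rightarrow> 'y \<Rightarrow> real) \<Rightarrow> (nat \<Rightarrow> ('x::banach \<times> 'y) \<Rightarrow> real)
     \<Rightarrow> (('x \<Rightarrow> real) \<times> (nat \<Rightarrow> 'y \<Rightarrow> real) \<times> (nat \<Rightarrow> real)) set" where
  "LambdaSet Y ny N = {(xs, yss, \<alpha>).
      bounded_linear xs \<and>
      (\<forall>k. bounded_functional_on (Y k) (ny k) (yss k)) \<and>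
      (\<forall>k. dual_norm (UNIV \<times> Y k) (N k) (\<lambda>(x, y). xs x + yss k y) \<le> 1) \<and>
      (\<forall>k. 0 \<le> \<alpha> k \<and> \<alpha> k \<le> 1) \<and>
      summable (\<lambda>k. (\<alpha> k)\<^sup>2) \<and> (\<Sum>k. (\<alpha> k)\<^sup>2) \<le> 1}"

definition lam_apply :: "(('x \<Rightarrow> real) \<times> (nat \<Rightarrow> 'y \<Rightarrow> real) \<times> (nat \<Rightarrow> real)) \<Rightarrow> ('x \<times> (nat \<Rightarrow> 'y)) \<Rightarrow> real" where
  "lam_apply l z = (case l of (xs, yss, \<alpha>) \<Rightarrow> case z of (x, ys) \<Rightarrow>
      xs x + (\<Sum>k. \<alpha> k * yss k (ys k)))"

definition sigma_norm ::
  "(nat \<Rightarrow> 'y::real_vector set) \<Rightarrow> (nat \<Rightarrow> 'y \<Rightarrow> real) \<Rightarrow> (nat \<Rightarrow> ('x::banach \<times> 'y) \<Rightarrow> real)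
     \<Rightarrow> ('x \<times> (nat \<Rightarrow> 'y)) \<Rightarrow> real" where
  "sigma_norm Y ny N z = Sup {\<bar>lam_apply l z\<bar> | l. l \<in> LambdaSet Y ny N}"

definition sigma_dual_norm ::
  "(nat \<Rightarrow> 'y::real_vector set) \<Rightarrow> (nat \<Rightarrow> 'y \<Rightarrow> real) \<Rightarrow> (nat \<Rightarrow> ('x::banach \<times> 'y) \<Rightarrow> real)
     \<Rightarrow> (('x \<times> (nat \<Rightarrow> 'y)) \<Rightarrow> real) \<Rightarrow> real" where
  "sigma_dual_norm Y ny N f = dual_norm (SigmaSp Y ny) (sigma_norm Y ny N) f"

end

theory Submission
  imports Defs
begin


definition good_graph :: "'a::real_vector set \<Rightarrow> ('a \<Rightarrow> real) \<Rightarrow> ('a \<times> real) set \<Rightarrow> bool" where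
  "good_graph V p G \<longleftrightarrow> G \<subseteq> V \<times> UNIV \<and> (\<forall>x a b. (x,a)\<in>G \<longrightarrow> (x,b)\<in>G \<longrightarrow> a = b) \<and>
     (\<forall>x a y b s t. (x,a)\<in>G \<longrightarrow> (y,b)\<in>G \<longrightarrow> (s *\<^sub>R x + t *\<^sub>R y, s*a + t*b) \<in> G) \<and>
     (\<forall>x a. (x,a)\<in>G \<longrightarrow> a \<le> p x)"


lemma gg_sub: "good_graph V p G \<Longrightarrow> (x,a) \<in> G \<Longrightarrow> x \<in> V"
  unfolding good_graph_def by blast
lemma gg_fun: "good_graph V p G \<Longrightarrow> (x,a) \<in> G \<Longrightarrow> (x,b) \<in> G \<Longrightarrow> a = b"
  unfolding good_graph_def by blast
lemma gg_lin: "good_graph V p G \<Longrightarrow> (x,a) \<in> G \<Longrightarrow> (y,b) \<in> G \<Longrightarrow> (s *\<^sub>R x + t *\<^sub>R y, s*a + t*b) \<in> G"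
  unfolding good_graph_def by blast
lemma gg_le: "good_graph V p G \<Longrightarrow> (x,a) \<in> G \<Longrightarrow> a \<le> p x"
  unfolding good_graph_def by blast

lemma HB_extend:
  fixes V :: "'a::real_vector set"
  assumes V: "subspace V"
    and padd: "\<And>x y. x\<in>V \<Longrightarrow> y\<in>V \<Longrightarrow> p (x+y) \<le> p x + p y"
    and phom: "\<And>x c. x\<in>V \<Longrightarrow> 0 \<le> c \<Longrightarrow> p (c *\<^sub>R x) = c * p x"
    and gM: "good_graph V p M" and zM: "(0,0) \<in> M"
    and w: "w \<in> V" "w \<notin> fst ` M"
  shows "\<exists>M'. good_graph V p M' \<and> M \<subseteq> M' \<and> M' \<noteq> M"
proof -
  have MV: "\<And>x a. (x,a)\<in>M \<Longrightarrow> x \<in> V" using gM unfolding good_graph_def by blast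
  have Mfun: "\<And>x a b. (x,a)\<in>M \<Longrightarrow> (x,b)\<in>M \<Longrightarrow> a = b" using gM unfolding good_graph_def by blast
  have Mlin: "\<And>x a y b s t. (x,a)\<in>M \<Longrightarrow> (y,b)\<in>M \<Longrightarrow> (s *\<^sub>R x + t *\<^sub>R y, s*a + t*b) \<in> M"
    using gM unfolding good_graph_def by blast
  have Mp: "\<And>x a. (x,a)\<in>M \<Longrightarrow> a \<le> p x" using gM unfolding good_graph_def by blast
  have Msc: "(s *\<^sub>R x, s*a) \<in> M" if "(x,a)\<in>M" for s x a
    using Mlin[OF that that, of s 0] by simp
  define S where "S = {b - p (y - w) | y b. (y,b)\<in>M}"
  have key: "b - p (y - w) \<le> p (x + w) - a" if "(x,a)\<in>M" "(y,b)\<in>M" for x a y b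
  proof -
    have "(x + y, a + b) \<in> M" using Mlin[OF that, of 1 1] by simp
    hence "a + b \<le> p (x + y)" by (rule Mp)
    also have "p (x + y) = p ((x + w) + (y - w))" by (simp add: algebra_simps)
    also have "\<dots> \<le> p (x + w) + p (y - w)"
      using padd[of "x+w" "y-w"] MV[OF that(1)] MV[OF that(2)] w(1) V by (simp add: subspace_add subspace_diff)
    finally show ?thesis by simp
  qed
  have Sne: "S \<noteq> {}" using zM unfolding S_def by blast
  have Sbdd: "bdd_above S" unfolding S_def bdd_above_def using key[OF zM] by blast
  define c where "c = Sup S"
  have c_ge: "b - p (y - w) \<le> c" if "(y,b)\<in>M" for y b
    unfolding c_def by (rule cSup_upper[OF _ Sbdd]) (use that S_def in blast)
  have c_le: "c \<le> p (x + w) - a" if "(x,a)\<in>M" for x a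
    unfolding c_def by (rule cSup_least[OF Sne]) (use key that S_def in blast)
  define M' where "M' = {(x + t *\<^sub>R w, a + t * c) | x a t. (x,a)\<in>M}"
  have "good_graph V p M'"
    unfolding good_graph_def
  proof (intro conjI allI impI)
    show "M' \<subseteq> V \<times> UNIV" unfolding M'_def using MV w V
      by (auto intro!: subspace_add subspace_scale)
  next
    fix z a' b'
    assume "(z, a') \<in> M'" "(z, b') \<in> M'"
    then obtain x a t y b u where xa: "(x,a)\<in>M" and yb: "(y,b)\<in>M"
      and e1: "z = x + t *\<^sub>R w" "a' = a + t * c" and e2: "z = y + u *\<^sub>R w" "b' = b + u * c"
      unfolding M'_def by blast
    have tu: "t = u"
    proof (rule ccontr)
      assume "t \<noteq> u"
      have "(x - y) = (u - t) *\<^sub>R w" using e1 e2 by (simp add: algebra_simps)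
      hence "(1/(u-t)) *\<^sub>R (x - y) = w" using \<open>t \<noteq> u\<close> by simp
      moreover have "(1/(u-t)) *\<^sub>R (x - y) = (1/(u-t)) *\<^sub>R x + (- 1/(u-t)) *\<^sub>R y"
        by (simp add: scaleR_diff_right)
      ultimately have "w = (1/(u-t)) *\<^sub>R x + (- 1/(u-t)) *\<^sub>R y" by simp
      hence "(w, (1/(u-t)) * a + (- 1/(u-t)) * b) \<in> M" using Mlin[OF xa yb, of "1/(u-t)" "-1/(u-t)"] by simp
      thus False using w(2) by force
    qed
    hence "x = y" using e1 e2 by simp
    hence "a = b" using Mfun xa yb by simp
    thus "a' = b'" using e1 e2 tu by simp
  next
    fix z a' z2 b' s r
    assume "(z, a') \<in> M'" "(z2, b') \<in> M'"
    then obtain x a t y b u where xa: "(x,a)\<in>M" and yb: "(y,b)\<in>M"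
      and e1: "z = x + t *\<^sub>R w" "a' = a + t * c" and e2: "z2 = y + u *\<^sub>R w" "b' = b + u * c"
      unfolding M'_def by blast
    have "(s *\<^sub>R x + r *\<^sub>R y, s*a + r*b) \<in> M" by (rule Mlin[OF xa yb])
    moreover have "s *\<^sub>R z + r *\<^sub>R z2 = (s *\<^sub>R x + r *\<^sub>R y) + (s*t + r*u) *\<^sub>R w"
      using e1 e2 by (simp add: algebra_simps)
    moreover have "s * a' + r * b' = (s*a + r*b) + (s*t + r*u) * c"
      using e1 e2 by (simp add: algebra_simps)
    ultimately show "(s *\<^sub>R z + r *\<^sub>R z2, s * a' + r * b') \<in> M'" unfolding M'_def by blast
  next
    fix z a'
    assume "(z, a') \<in> M'"
    then obtain x a t where xa: "(x,a)\<in>M" and e1: "z = x + t *\<^sub>R w" "a' = a + t * c"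
      unfolding M'_def by blast
    have xV: "x \<in> V" using MV xa .
    consider "t = 0" | "t > 0" | "t < 0" by linarith
    then show "a' \<le> p z"
    proof cases
      case 1 thus ?thesis using e1 Mp xa by simp
    next
      case 2
      have m: "((1/t) *\<^sub>R x, (1/t) * a) \<in> M" by (rule Msc[OF xa])
      have "c \<le> p ((1/t) *\<^sub>R x + w) - (1/t) * a" by (rule c_le[OF m])
      hence "t * c \<le> t * (p ((1/t) *\<^sub>R x + w) - (1/t) * a)" using 2 by (simp add: mult_left_mono)
      also have "\<dots> = t * p ((1/t) *\<^sub>R x + w) - a" using 2 by (simp add: right_diff_distrib)
      finally have "t * c \<le> t * p ((1/t) *\<^sub>R x + w) - a" .
      also have "t * p ((1/t) *\<^sub>R x + w) = p (t *\<^sub>R ((1/t) *\<^sub>R x + w))"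
        using phom[of "(1/t) *\<^sub>R x + w" t] 2 xV w V by (simp add: subspace_add subspace_scale)
      also have "t *\<^sub>R ((1/t) *\<^sub>R x + w) = z" using 2 e1 by (simp add: scaleR_add_right)
      finally show ?thesis using e1 by simp
    next
      case 3
      define s where "s = - t"
      have s: "s > 0" using 3 s_def by simp
      have m: "((1/s) *\<^sub>R x, (1/s) * a) \<in> M" by (rule Msc[OF xa])
      have "(1/s) * a - p ((1/s) *\<^sub>R x - w) \<le> c" by (rule c_ge[OF m])
      hence "s * ((1/s) * a - p ((1/s) *\<^sub>R x - w)) \<le> s * c" using s by (simp add: mult_left_mono)
      moreover have "s * ((1/s) * a - p ((1/s) *\<^sub>R x - w)) = a - s * p ((1/s) *\<^sub>R x - w)" using s by (simp add: right_diff_distrib)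
      ultimately have "a - s * p ((1/s) *\<^sub>R x - w) \<le> s * c" by simp
      also have "s * p ((1/s) *\<^sub>R x - w) = p (s *\<^sub>R ((1/s) *\<^sub>R x - w))"
        using phom[of "(1/s) *\<^sub>R x - w" s] s xV w V by (simp add: subspace_diff subspace_scale)
      also have "s *\<^sub>R ((1/s) *\<^sub>R x - w) = z" using s e1 s_def by (simp add: scaleR_diff_right)
      finally show ?thesis using e1 s_def by simp
    qed
  qed
  moreover have "M \<subseteq> M'"
  proof
    fix z assume "z \<in> M"
    then obtain x a where z: "z = (x,a)" "(x,a) \<in> M" by (cases z) auto
    have "(x + 0 *\<^sub>R w, a + 0 * c) \<in> M'" unfolding M'_def using z(2) by blast
    thus "z \<in> M'" using z by simp
  qed
  moreover have "(0 + 1 *\<^sub>R w, 0 + 1 * c) \<in> M'" unfolding M'_def using zM by blast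
  hence "(w, c) \<in> M'" by simp
  hence "M' \<noteq> M" using w(2) by force
  ultimately show ?thesis by blast
qed

lemma HB_point:
  fixes V :: "'a::real_vector set"
  assumes V: "subspace V"
    and padd: "\<And>x y. x\<in>V \<Longrightarrow> y\<in>V \<Longrightarrow> p (x+y) \<le> p x + p y"
    and phom: "\<And>x c. x\<in>V \<Longrightarrow> 0 \<le> c \<Longrightarrow> p (c *\<^sub>R x) = c * p x"
    and v: "v \<in> V"
  shows "\<exists>f. linear_on V f \<and> (\<forall>x\<in>V. f x \<le> p x) \<and> f v = p v"
proof -
  have p0: "p 0 = 0" using phom[of 0 0] V by (simp add: subspace_0)
  define A where "A = {G. good_graph V p G \<and> (v, p v) \<in> G}"
  define G0 where "G0 = {(t *\<^sub>R v, t * p v) | t. True}"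
  have G0A: "G0 \<in> A" unfolding A_def
  proof (intro CollectI conjI)
    show "(v, p v) \<in> G0" unfolding G0_def by (auto intro: exI[of _ 1])
    show "good_graph V p G0" unfolding good_graph_def
    proof (intro conjI allI impI)
      show "G0 \<subseteq> V \<times> UNIV" unfolding G0_def using V v by (auto intro: subspace_scale)
    next
      fix x a b assume "(x,a) \<in> G0" "(x,b) \<in> G0"
      then obtain t u where e: "x = t *\<^sub>R v" "a = t * p v" "x = u *\<^sub>R v" "b = u * p v"
        unfolding G0_def by blast
      show "a = b"
      proof (cases "v = 0")
        case True thus ?thesis using e p0 by simp
      next
        case False
        hence "t = u" using e by (metis scaleR_cancel_right)
        thus ?thesis using e by simp
      qed
    next
      fix x a y b s t assume "(x,a) \<in> G0" "(y,b) \<in> G0"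
      then obtain t1 t2 where e: "x = t1 *\<^sub>R v" "a = t1 * p v" "y = t2 *\<^sub>R v" "b = t2 * p v"
        unfolding G0_def by blast
      have "s *\<^sub>R x + t *\<^sub>R y = (s*t1 + t*t2) *\<^sub>R v" "s * a + t * b = (s*t1 + t*t2) * p v"
        using e by (simp_all add: algebra_simps)
      thus "(s *\<^sub>R x + t *\<^sub>R y, s * a + t * b) \<in> G0" unfolding G0_def by blast
    next
      fix x a assume "(x,a) \<in> G0"
      then obtain t where e: "x = t *\<^sub>R v" "a = t * p v" unfolding G0_def by blast
      show "a \<le> p x"
      proof (cases "t \<ge> 0")
        case True thus ?thesis using e phom v by simp
      next
        case False
        have nv: "- v \<in> V" using V v by (rule subspace_neg)
        have "p 0 \<le> p v + p (- v)" using padd[OF v nv] by simp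
        hence "0 \<le> p v + p (-v)" using p0 by simp
        hence "t * p v \<le> (- t) * p (- v)" using False
          by (smt (verit) mult_nonneg_nonneg distrib_left mult_minus_left)
        also have "(- t) * p (- v) = p ((- t) *\<^sub>R (- v))" using phom[OF nv, of "- t"] False by simp
        also have "(- t) *\<^sub>R (- v) = x" using e by simp
        finally show ?thesis using e by simp
      qed
    qed
  qed
  have "\<exists>M\<in>A. \<forall>X\<in>A. M \<subseteq> X \<longrightarrow> X = M"
  proof (rule Zorn_Lemma2, intro ballI)
    fix C assume C: "C \<in> chains A"
    show "\<exists>U\<in>A. \<forall>X\<in>C. X \<subseteq> U"
    proof (cases "C = {}")
      case True thus ?thesis using G0A by blast
    next
      case False
      have CA: "C \<subseteq> A" using C by (rule chainsD2)
      have tot: "X \<subseteq> Y \<or> Y \<subseteq> X" if "X \<in> C" "Y \<in> C" for X Y using chainsD[OF C that] .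
      have gC: "good_graph V p X" if "X \<in> C" for X using CA that unfolding A_def by blast
      have "\<Union>C \<in> A" unfolding A_def
      proof (intro CollectI conjI)
        show "(v, p v) \<in> \<Union>C" using False CA unfolding A_def by blast
        show "good_graph V p (\<Union>C)" unfolding good_graph_def
        proof (intro conjI allI impI)
          show "\<Union>C \<subseteq> V \<times> UNIV" using gC gg_sub by fast
        next
          fix x a b assume "(x,a) \<in> \<Union>C" "(x,b) \<in> \<Union>C"
          then obtain X Y where "X \<in> C" "Y \<in> C" "(x,a)\<in>X" "(x,b)\<in>Y" by blast
          have fX: "\<And>x a b. (x,a)\<in>Z \<Longrightarrow> (x,b)\<in>Z \<Longrightarrow> a = b" if "Z \<in> C" for Z
            using gg_fun[OF gC[OF that]] by blast
          show "a = b"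
          proof (cases "X \<subseteq> Y")
            case True thus ?thesis using fX[of Y] \<open>Y \<in> C\<close> \<open>(x,a)\<in>X\<close> \<open>(x,b)\<in>Y\<close> by blast
          next
            case False hence "Y \<subseteq> X" using tot \<open>X \<in> C\<close> \<open>Y \<in> C\<close> by blast
            thus ?thesis using fX[of X] \<open>X \<in> C\<close> \<open>(x,a)\<in>X\<close> \<open>(x,b)\<in>Y\<close> by blast
          qed
        next
          fix x a y b s t assume "(x,a) \<in> \<Union>C" "(y,b) \<in> \<Union>C"
          then obtain X Y where XY: "X \<in> C" "Y \<in> C" "(x,a)\<in>X" "(y,b)\<in>Y" by blast
          show "(s *\<^sub>R x + t *\<^sub>R y, s * a + t * b) \<in> \<Union>C"
          proof (cases "X \<subseteq> Y")
            case True
            hence "(s *\<^sub>R x + t *\<^sub>R y, s * a + t * b) \<in> Y" using XY gg_lin[OF gC[of Y]] by blast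
            thus ?thesis using XY by blast
          next
            case False
            hence "Y \<subseteq> X" using tot XY by blast
            hence "(s *\<^sub>R x + t *\<^sub>R y, s * a + t * b) \<in> X" using XY gg_lin[OF gC[of X]] by blast
            thus ?thesis using XY by blast
          qed
        next
          fix x a assume "(x,a) \<in> \<Union>C"
          thus "a \<le> p x" using gC gg_le by fast
        qed
      qed
      thus ?thesis by blast
    qed
  qed
  then obtain M where MA: "M \<in> A" and Mmax: "\<And>X. X \<in> A \<Longrightarrow> M \<subseteq> X \<Longrightarrow> X = M" by blast
  have gM: "good_graph V p M" and vM: "(v, p v) \<in> M" using MA unfolding A_def by auto
  have MV: "\<And>x a. (x,a)\<in>M \<Longrightarrow> x \<in> V" using gM unfolding good_graph_def by blast
  have Mfun: "\<And>x a b. (x,a)\<in>M \<Longrightarrow> (x,b)\<in>M \<Longrightarrow> a = b" using gM unfolding good_graph_def by blast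
  have Mlin: "\<And>x a y b s t. (x,a)\<in>M \<Longrightarrow> (y,b)\<in>M \<Longrightarrow> (s *\<^sub>R x + t *\<^sub>R y, s*a + t*b) \<in> M"
    using gM unfolding good_graph_def by blast
  have Mp: "\<And>x a. (x,a)\<in>M \<Longrightarrow> a \<le> p x" using gM unfolding good_graph_def by blast
  have zM: "(0,0) \<in> M" using Mlin[OF vM vM, of 0 0] by simp
  have dom: "\<exists>a. (x,a) \<in> M" if xV: "x \<in> V" for x
  proof (rule ccontr)
    assume "\<nexists>a. (x, a) \<in> M"
    hence "x \<notin> fst ` M" by force
    then obtain M' where M': "good_graph V p M'" "M \<subseteq> M'" "M' \<noteq> M"
      using HB_extend[OF V padd phom gM zM xV] by blast
    have "M' \<in> A" unfolding A_def using M' vM by blast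
    thus False using Mmax M' by blast
  qed
  define f where "f x = (THE a. (x,a) \<in> M)" for x
  have fM: "(x, f x) \<in> M" if xV: "x \<in> V" for x
  proof -
    obtain a where "(x,a)\<in>M" using dom[OF xV] by blast
    hence "(THE a. (x,a)\<in>M) = a" using Mfun by (intro the_equality) auto
    thus ?thesis using \<open>(x,a)\<in>M\<close> unfolding f_def by simp
  qed
  have fv: "f x = a" if "(x,a) \<in> M" for x a using Mfun fM MV that by blast
  show ?thesis
  proof (intro exI conjI ballI)
    show "linear_on V f" unfolding linear_on_def
    proof (intro ballI allI)
      fix x y a b assume "x \<in> V" "y \<in> V"
      hence "(a *\<^sub>R x + b *\<^sub>R y, a * f x + b * f y) \<in> M" using fM Mlin by blast
      thus "f (a *\<^sub>R x + b *\<^sub>R y) = a * f x + b * f y" by (rule fv)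
    qed
    show "f x \<le> p x" if "x \<in> V" for x using Mp fM that by blast
    show "f v = p v" using fv vM .
  qed
qed



lemma lin_scale: "linear_on S f \<Longrightarrow> x \<in> S \<Longrightarrow> f (c *\<^sub>R x) = c * f x"
proof -
  assume f: "linear_on S f" and x: "x \<in> S"
  have "\<forall>a b. f (a *\<^sub>R x + b *\<^sub>R x) = a * f x + b * f x" using f x unfolding linear_on_def by blast
  from this[rule_format, of c 0] show ?thesis by simp
qed

lemma lin_add: "linear_on S f \<Longrightarrow> x \<in> S \<Longrightarrow> y \<in> S \<Longrightarrow> f (x + y) = f x + f y"
proof -
  assume f: "linear_on S f" and x: "x \<in> S" and y: "y \<in> S"
  have "\<forall>a b. f (a *\<^sub>R x + b *\<^sub>R y) = a * f x + b * f y" using f x y unfolding linear_on_def by blast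
  from this[rule_format, of 1 1] show ?thesis by simp
qed

lemma lin_zero: "linear_on S f \<Longrightarrow> subspace S \<Longrightarrow> f 0 = 0"
  using lin_scale[of S f 0 0] by (simp add: subspace_0)

lemma norm_on_nonneg: "is_norm_on S n \<Longrightarrow> x \<in> S \<Longrightarrow> 0 \<le> n x"
  unfolding is_norm_on_def by (elim conjE) (erule bspec)
lemma norm_on_zero_iff: "is_norm_on S n \<Longrightarrow> x \<in> S \<Longrightarrow> n x = 0 \<longleftrightarrow> x = 0"
  unfolding is_norm_on_def by (elim conjE) (erule bspec)
lemma norm_on_scale: "is_norm_on S n \<Longrightarrow> x \<in> S \<Longrightarrow> n (c *\<^sub>R x) = \<bar>c\<bar> * n x"
  unfolding is_norm_on_def by (elim conjE) (drule bspec, assumption, erule spec)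
lemma norm_on_tri: "is_norm_on S n \<Longrightarrow> x \<in> S \<Longrightarrow> y \<in> S \<Longrightarrow> n (x + y) \<le> n x + n y"
  unfolding is_norm_on_def by (elim conjE) (drule bspec, assumption, erule bspec, assumption)
lemma norm_on_zero: "is_norm_on S n \<Longrightarrow> subspace S \<Longrightarrow> n 0 = 0"
  using norm_on_zero_iff[of S n 0] by (simp add: subspace_0)
lemma norm_on_neg: "is_norm_on S n \<Longrightarrow> x \<in> S \<Longrightarrow> n (- x) = n x"
  using norm_on_scale[of S n x "-1"] by simp

lemma subspace_prod: "subspace S \<Longrightarrow> subspace (UNIV \<times> S)"
  unfolding subspace_def by (auto simp: zero_prod_def)

lemma dual_bound:
  assumes S: "subspace S" and n: "is_norm_on S n" and F: "linear_on S F"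
    and K: "\<forall>z\<in>S. \<bar>F z\<bar> \<le> K * n z" and z: "z \<in> S"
  shows "\<bar>F z\<bar> \<le> dual_norm S n F * n z"
proof -
  define D where "D = {\<bar>F z\<bar> | z. z \<in> S \<and> n z \<le> 1}"
  have bdd: "bdd_above D" unfolding bdd_above_def D_def
  proof (intro exI[of _ "\<bar>K\<bar>"] ballI)
    fix d assume "d \<in> {\<bar>F z\<bar> |z. z \<in> S \<and> n z \<le> 1}"
    then obtain u where u: "u \<in> S" "n u \<le> 1" "d = \<bar>F u\<bar>" by blast
    have "d \<le> K * n u" using K u(1) u(3) by blast
    also have "K * n u \<le> \<bar>K\<bar> * n u" using norm_on_nonneg[OF n u(1)] by (simp add: mult_right_mono)
    also have "\<dots> \<le> \<bar>K\<bar>" by (rule mult_left_le[OF u(2)]) simp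
    finally show "d \<le> \<bar>K\<bar>" .
  qed
  show ?thesis
  proof (cases "n z = 0")
    case True
    hence "z = 0" using norm_on_zero_iff[OF n z] by simp
    thus ?thesis using lin_zero[OF F S] True by simp
  next
    case False
    hence pos: "n z > 0" using norm_on_nonneg[OF n z] by simp
    define z' where "z' = (1 / n z) *\<^sub>R z"
    have z'S: "z' \<in> S" unfolding z'_def using S z by (rule subspace_scale)
    have "n z' = 1" unfolding z'_def using norm_on_scale[OF n z] pos by simp
    hence "\<bar>F z'\<bar> \<in> D" unfolding D_def using z'S by auto
    hence "\<bar>F z'\<bar> \<le> dual_norm S n F" unfolding dual_norm_def D_def[symmetric] using bdd by (rule cSup_upper)
    moreover have "\<bar>F z'\<bar> = \<bar>F z\<bar> / n z" unfolding z'_def using lin_scale[OF F z] pos by simp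
    ultimately have "\<bar>F z\<bar> / n z \<le> dual_norm S n F" by simp
    thus ?thesis using pos_divide_le_eq[OF pos] by blast
  qed
qed

lemma dual_le:
  assumes S: "subspace S" and n: "is_norm_on S n"
    and b: "\<forall>z\<in>S. \<bar>F z\<bar> \<le> d * n z" and d: "0 \<le> d"
  shows "dual_norm S n F \<le> d"
  unfolding dual_norm_def
proof (rule cSup_least)
  have "0 \<in> S" by (rule subspace_0[OF S])
  hence "\<bar>F 0\<bar> \<in> {\<bar>F z\<bar> |z. z \<in> S \<and> n z \<le> 1}" using norm_on_zero[OF n S] by auto
  thus "{\<bar>F z\<bar> |z. z \<in> S \<and> n z \<le> 1} \<noteq> {}" by blast
next
  fix x assume "x \<in> {\<bar>F z\<bar> |z. z \<in> S \<and> n z \<le> 1}"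
  then obtain u where u: "u \<in> S" "n u \<le> 1" "x = \<bar>F u\<bar>" by blast
  have "d * n u \<le> d" by (rule mult_left_le[OF u(2) d])
  moreover have "x \<le> d * n u" using b u(1) u(3) by blast
  ultimately show "x \<le> d" by linarith
qed





lemma LambdaSet_iff: "(xs, yss, \<alpha>) \<in> LambdaSet Y ny N \<longleftrightarrow>
      bounded_linear xs \<and>
      (\<forall>k. bounded_functional_on (Y k) (ny k) (yss k)) \<and>
      (\<forall>k. dual_norm (UNIV \<times> Y k) (N k) (\<lambda>(x, y). xs x + yss k y) \<le> 1) \<and>
      (\<forall>k. 0 \<le> \<alpha> k \<and> \<alpha> k \<le> 1) \<and>
      summable (\<lambda>k. (\<alpha> k)\<^sup>2) \<and> (\<Sum>k. (\<alpha> k)\<^sup>2) \<le> 1"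
  unfolding LambdaSet_def by simp

lemma SigmaSp_iff: "(x, zs) \<in> SigmaSp Y ny \<longleftrightarrow> (\<forall>k. zs k \<in> Y k) \<and> summable (\<lambda>k. (ny k (zs k))\<^sup>2)"
  unfolding SigmaSp_def by simp

lemma lam_apply_simp: "lam_apply (xs, yss, \<alpha>) (x, zs) = xs x + (\<Sum>k. \<alpha> k * yss k (zs k))"
  unfolding lam_apply_def by simp

locale l2s =
  fixes Y :: "nat \<Rightarrow> 'y::real_vector set" and ny :: "nat \<Rightarrow> 'y \<Rightarrow> real"
    and N :: "nat \<Rightarrow> ('x::banach \<times> 'y) \<Rightarrow> real"
  assumes setting: "l2sum_setting Y ny N"
begin

lemma Ysub: "subspace (Y j)" using setting unfolding l2sum_setting_def by blast
lemma Yn: "is_norm_on (Y j) (ny j)" using setting unfolding l2sum_setting_def by blast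
lemma Vsub: "subspace (UNIV \<times> Y j)" using Ysub by (rule subspace_prod)
lemma Nn: "is_norm_on (UNIV \<times> Y j) (N j)" using setting unfolding l2sum_setting_def by blast
lemma N_x0: "N j (x, 0) = norm x" using setting unfolding l2sum_setting_def by blast
lemma N_0y: "y \<in> Y j \<Longrightarrow> N j (0, y) = ny j y" using setting unfolding l2sum_setting_def by blast
lemma N_ge: "y \<in> Y j \<Longrightarrow> norm x \<le> N j (x, y)" using setting unfolding l2sum_setting_def by blast
lemma Y0: "0 \<in> Y j" using Ysub by (rule subspace_0)
lemma ny0: "ny j 0 = 0" using norm_on_zero[OF Yn Ysub] .

lemma ny_le_N: assumes y: "y \<in> Y j" shows "ny j y \<le> 2 * N j (x, y)"
proof -
  have "(0::'x, y) = (x, y) + (- x, 0)" by simp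
  hence "N j (0, y) \<le> N j (x, y) + N j (- x, 0)"
    using norm_on_tri[OF Nn, of "(x,y)" j "(-x, 0)"] y Y0 by simp
  thus ?thesis using N_0y[OF y] N_x0[of j "-x"] N_ge[OF y, of x] by simp
qed

lemma Lam_F_le:
  assumes l: "(xs, yss, \<alpha>) \<in> LambdaSet Y ny N" and y: "y \<in> Y j"
  shows "\<bar>xs x + yss j y\<bar> \<le> N j (x, y)"
proof -
  have xs: "bounded_linear xs" and bf: "bounded_functional_on (Y j) (ny j) (yss j)"
    and dn: "dual_norm (UNIV \<times> Y j) (N j) (\<lambda>(x, y). xs x + yss j y) \<le> 1"
    using l unfolding LambdaSet_iff by blast+
  have yl: "linear_on (Y j) (yss j)" and "\<exists>C. \<forall>y\<in>Y j. \<bar>yss j y\<bar> \<le> C * ny j y"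
    using bf unfolding bounded_functional_on_def by blast+
  then obtain C where C: "\<And>y. y \<in> Y j \<Longrightarrow> \<bar>yss j y\<bar> \<le> C * ny j y" by blast
  obtain K0 where K0: "\<And>x. norm (xs x) \<le> norm x * K0" "K0 > 0"
    using bounded_linear.pos_bounded[OF xs] by blast
  have xl: "linear xs" using xs by (rule bounded_linear.linear)
  define F where "F = (\<lambda>(x, y). xs x + yss j y)"
  have Fl: "linear_on (UNIV \<times> Y j) F" unfolding linear_on_def
  proof (intro ballI allI)
    fix z z' :: "'x \<times> 'y" and a b :: real
    assume "z \<in> UNIV \<times> Y j" "z' \<in> UNIV \<times> Y j"
    then obtain x1 y1 x2 y2 where e: "z = (x1, y1)" "z' = (x2, y2)" "y1 \<in> Y j" "y2 \<in> Y j" by auto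
    have "yss j (a *\<^sub>R y1 + b *\<^sub>R y2) = a * yss j y1 + b * yss j y2"
      using yl e(3,4) unfolding linear_on_def by blast
    moreover have "xs (a *\<^sub>R x1 + b *\<^sub>R x2) = a * xs x1 + b * xs x2"
      using linear_add[OF xl] linear_scale[OF xl] by simp
    ultimately show "F (a *\<^sub>R z + b *\<^sub>R z') = a * F z + b * F z'"
      unfolding F_def e by (simp add: algebra_simps)
  qed
  have Fb: "\<forall>z\<in>UNIV \<times> Y j. \<bar>F z\<bar> \<le> (K0 + 2 * \<bar>C\<bar>) * N j z"
  proof
    fix z :: "'x \<times> 'y" assume "z \<in> UNIV \<times> Y j"
    then obtain x1 y1 where e: "z = (x1, y1)" "y1 \<in> Y j" by auto
    have n1: "\<bar>xs x1\<bar> \<le> K0 * N j (x1, y1)"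
      using K0(1)[of x1] N_ge[OF e(2), of x1] K0(2) by (smt (verit) mult.commute mult_left_mono real_norm_def)
    have "\<bar>yss j y1\<bar> \<le> C * ny j y1" by (rule C[OF e(2)])
    also have "\<dots> \<le> \<bar>C\<bar> * ny j y1" using norm_on_nonneg[OF Yn e(2)] by (simp add: mult_right_mono)
    also have "\<dots> \<le> \<bar>C\<bar> * (2 * N j (x1, y1))" using ny_le_N[OF e(2), of x1] by (simp add: mult_left_mono)
    finally have n2: "\<bar>yss j y1\<bar> \<le> 2 * \<bar>C\<bar> * N j (x1, y1)" by simp
    have "\<bar>F z\<bar> \<le> \<bar>xs x1\<bar> + \<bar>yss j y1\<bar>" unfolding F_def e by simp
    also have "\<dots> \<le> K0 * N j (x1, y1) + 2 * \<bar>C\<bar> * N j (x1, y1)" using n1 n2 by linarith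
    also have "\<dots> = (K0 + 2 * \<bar>C\<bar>) * N j z" unfolding e by (simp add: algebra_simps)
    finally show "\<bar>F z\<bar> \<le> (K0 + 2 * \<bar>C\<bar>) * N j z" .
  qed
  have zV: "(x, y) \<in> UNIV \<times> Y j" using y by simp
  have "\<bar>F (x, y)\<bar> \<le> dual_norm (UNIV \<times> Y j) (N j) F * N j (x, y)"
    by (rule dual_bound[OF Vsub Nn Fl Fb zV])
  also have "\<dots> \<le> 1 * N j (x, y)"
    using dn norm_on_nonneg[OF Nn zV] unfolding F_def by (intro mult_right_mono) auto
  finally show ?thesis unfolding F_def by simp
qed

lemma Lam_xs: assumes l: "(xs, yss, \<alpha>) \<in> LambdaSet Y ny N" shows "\<bar>xs x\<bar> \<le> norm x"
proof -
  have bf: "bounded_functional_on (Y 0) (ny 0) (yss 0)" using l unfolding LambdaSet_iff by blast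
  hence "yss 0 0 = 0" unfolding bounded_functional_on_def using lin_zero Ysub by blast
  thus ?thesis using Lam_F_le[OF l Y0[of 0], of x] N_x0 by simp
qed

lemma Lam_yss: assumes l: "(xs, yss, \<alpha>) \<in> LambdaSet Y ny N" and y: "y \<in> Y j"
  shows "\<bar>yss j y\<bar> \<le> ny j y"
proof -
  have "xs 0 = 0" using l unfolding LambdaSet_iff using bounded_linear.linear linear_0 by blast
  thus ?thesis using Lam_F_le[OF l y, of 0] N_0y[OF y] by simp
qed

lemma Lam_yss0: assumes l: "(xs, yss, \<alpha>) \<in> LambdaSet Y ny N" shows "yss j 0 = 0"
  using Lam_yss[OF l Y0, of j] ny0 by simp

end


context l2s begin

lemma Lam_sum:
  assumes l: "(xs, yss, \<alpha>) \<in> LambdaSet Y ny N" and z: "(x, zs) \<in> SigmaSp Y ny"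
  shows "\<bar>lam_apply (xs, yss, \<alpha>) (x, zs)\<bar> \<le> norm x + (1 + (\<Sum>j. (ny j (zs j))\<^sup>2)) / 2"
proof -
  have a01: "\<And>j. 0 \<le> \<alpha> j \<and> \<alpha> j \<le> 1" and sa: "summable (\<lambda>k. (\<alpha> k)\<^sup>2)" and sa1: "(\<Sum>k. (\<alpha> k)\<^sup>2) \<le> 1"
    using l unfolding LambdaSet_iff by blast+
  have zY: "\<And>j. zs j \<in> Y j" and sb: "summable (\<lambda>k. (ny k (zs k))\<^sup>2)"
    using z unfolding SigmaSp_iff by blast+
  define b where "b j = ny j (zs j)" for j
  define f where "f j = \<alpha> j * yss j (zs j)" for j
  define g where "g j = ((\<alpha> j)\<^sup>2 + (b j)\<^sup>2) / 2" for j
  have fg: "\<bar>f j\<bar> \<le> g j" for j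
  proof -
    have "\<bar>f j\<bar> = \<alpha> j * \<bar>yss j (zs j)\<bar>" unfolding f_def using a01[of j] by (simp add: abs_mult)
    also have "\<dots> \<le> \<alpha> j * b j" unfolding b_def using Lam_yss[OF l zY[of j]] a01[of j] by (simp add: mult_left_mono)
    also have "\<dots> \<le> g j"
    proof -
      have "0 \<le> (\<alpha> j - b j)\<^sup>2" by simp
      moreover have "(\<alpha> j - b j)\<^sup>2 = (\<alpha> j)\<^sup>2 + (b j)\<^sup>2 - 2 * (\<alpha> j * b j)" by (simp add: power2_diff)
      ultimately have h: "0 \<le> (\<alpha> j)\<^sup>2 + (b j)\<^sup>2 - 2 * (\<alpha> j * b j)" by simp
      hence "2 * (\<alpha> j * b j) \<le> (\<alpha> j)\<^sup>2 + (b j)\<^sup>2" by linarith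
      thus ?thesis unfolding g_def by simp
    qed
    finally show ?thesis .
  qed
  have sb': "summable (\<lambda>j. (b j)\<^sup>2)" using sb unfolding b_def .
  have sg: "summable g" unfolding g_def by (intro summable_divide summable_add sa sb')
  have saf: "summable (\<lambda>j. \<bar>f j\<bar>)" by (rule summable_comparison_test'[OF sg, of 0]) (use fg in simp)
  have sf: "summable f" by (rule summable_comparison_test'[OF sg, of 0]) (use fg in simp)
  have "\<bar>suminf f\<bar> \<le> (\<Sum>j. \<bar>f j\<bar>)" by (rule summable_rabs[OF saf])
  also have "\<dots> \<le> suminf g" by (rule suminf_le[OF fg saf sg])
  also have "suminf g = ((\<Sum>j. (\<alpha> j)\<^sup>2) + (\<Sum>j. (b j)\<^sup>2)) / 2"
    unfolding g_def using suminf_divide[OF summable_add[OF sa sb'], of 2] suminf_add[OF sa sb'] by simp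
  also have "\<dots> \<le> (1 + (\<Sum>j. (b j)\<^sup>2)) / 2" using sa1 by simp
  finally have S: "\<bar>suminf f\<bar> \<le> (1 + (\<Sum>j. (ny j (zs j))\<^sup>2)) / 2" unfolding b_def .
  have "\<bar>lam_apply (xs, yss, \<alpha>) (x, zs)\<bar> = \<bar>xs x + suminf f\<bar>" unfolding lam_apply_simp f_def ..
  also have "\<dots> \<le> \<bar>xs x\<bar> + \<bar>suminf f\<bar>" by (rule abs_triangle_ineq)
  also have "\<dots> \<le> norm x + (1 + (\<Sum>j. (ny j (zs j))\<^sup>2)) / 2" using Lam_xs[OF l, of x] S by linarith
  finally show ?thesis .
qed

lemma construct:
  assumes phl: "linear_on (UNIV \<times> Y k) \<phi>" and phb: "\<forall>z\<in>UNIV \<times> Y k. \<bar>\<phi> z\<bar> \<le> N k z"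
  shows "(\<lambda>x. \<phi> (x, 0), \<lambda>j. if j = k then (\<lambda>y. \<phi> (0, y)) else (\<lambda>_. 0), \<lambda>j. if j = k then 1 else 0)
            \<in> LambdaSet Y ny N" (is ?A)
    and "zs k \<in> Y k \<Longrightarrow> lam_apply (\<lambda>x. \<phi> (x, 0), \<lambda>j. if j = k then (\<lambda>y. \<phi> (0, y)) else (\<lambda>_. 0),
            \<lambda>j. if j = k then 1 else 0) (x, zs) = \<phi> (x, zs k)" (is "_ \<Longrightarrow> ?B")
proof -
  have x0V: "(x, 0) \<in> UNIV \<times> Y k" for x using Y0 by simp
  have phx: "\<bar>\<phi> (x, 0)\<bar> \<le> norm x" for x
  proof -
    have "\<bar>\<phi> (x, 0)\<bar> \<le> N k (x, 0)" using phb x0V[of x] by blast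
    thus ?thesis using N_x0[of k x] by simp
  qed
  have bl: "bounded_linear (\<lambda>x. \<phi> (x, 0))"
  proof (rule bounded_linear_intro[where K=1])
    fix x y :: 'x
    have "\<phi> ((x, 0) + (y, 0)) = \<phi> (x, 0) + \<phi> (y, 0)" by (rule lin_add[OF phl x0V x0V])
    thus "\<phi> (x + y, 0) = \<phi> (x, 0) + \<phi> (y, 0)" by simp
  next
    fix r and x :: 'x
    have "\<phi> (r *\<^sub>R (x, 0)) = r * \<phi> (x, 0)" by (rule lin_scale[OF phl x0V])
    thus "\<phi> (r *\<^sub>R x, 0) = r *\<^sub>R \<phi> (x, 0)" by simp
  next
    fix x :: 'x show "norm (\<phi> (x, 0)) \<le> norm x * 1" using phx[of x] by simp
  qed
  have bf: "bounded_functional_on (Y j) (ny j) (if j = k then (\<lambda>y. \<phi> (0, y)) else (\<lambda>_. 0))" for j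
  proof (cases "j = k")
    case True
    have "linear_on (Y k) (\<lambda>y. \<phi> (0, y))" unfolding linear_on_def
    proof (intro ballI allI)
      fix y y' a b assume "y \<in> Y k" "y' \<in> Y k"
      hence "(0::'x, y) \<in> UNIV \<times> Y k" "(0::'x, y') \<in> UNIV \<times> Y k" by auto
      hence "\<phi> (a *\<^sub>R (0::'x, y) + b *\<^sub>R (0, y')) = a * \<phi> (0, y) + b * \<phi> (0, y')"
        using phl unfolding linear_on_def by blast
      thus "\<phi> (0, a *\<^sub>R y + b *\<^sub>R y') = a * \<phi> (0, y) + b * \<phi> (0, y')" by simp
    qed
    moreover have "\<exists>C. \<forall>y\<in>Y k. \<bar>\<phi> (0, y)\<bar> \<le> C * ny k y"
    proof (rule exI[of _ 1])
      show "\<forall>y\<in>Y k. \<bar>\<phi> (0, y)\<bar> \<le> 1 * ny k y"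
    proof
      fix y assume y: "y \<in> Y k"
      hence "\<bar>\<phi> (0, y)\<bar> \<le> N k (0, y)" using phb by simp
      thus "\<bar>\<phi> (0, y)\<bar> \<le> 1 * ny k y" using N_0y[OF y] by simp
    qed
    qed
    ultimately show ?thesis using True unfolding bounded_functional_on_def by auto
  next
    case False
    have e: "(if j = k then (\<lambda>y. \<phi> (0, y)) else (\<lambda>_. 0)) = (\<lambda>_. 0)" using False by simp
    have "linear_on (Y j) (\<lambda>_. 0)" unfolding linear_on_def by simp
    moreover have "\<forall>y\<in>Y j. \<bar>(0::real)\<bar> \<le> 0 * ny j y" by simp
    ultimately show ?thesis unfolding e bounded_functional_on_def by blast
  qed
  have dn: "dual_norm (UNIV \<times> Y j) (N j)
      (\<lambda>(x, y). \<phi> (x, 0) + (if j = k then (\<lambda>y. \<phi> (0, y)) else (\<lambda>_. 0)) y) \<le> 1" for j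
  proof (rule dual_le[OF Vsub Nn], intro ballI)
    fix z :: "'x \<times> 'y" assume "z \<in> UNIV \<times> Y j"
    then obtain x y where e: "z = (x, y)" "y \<in> Y j" by auto
    show "\<bar>(\<lambda>(x, y). \<phi> (x, 0) + (if j = k then (\<lambda>y. \<phi> (0, y)) else (\<lambda>_. 0)) y) z\<bar> \<le> 1 * N j z"
    proof (cases "j = k")
      case True
      have "\<phi> ((x, 0) + (0, y)) = \<phi> (x, 0) + \<phi> (0, y)"
        using lin_add[OF phl x0V[of x], of "(0,y)"] e True by simp
      hence "\<phi> (x, 0) + \<phi> (0, y) = \<phi> z" using e by simp
      moreover have "\<bar>\<phi> z\<bar> \<le> N j z" using phb e True by simp
      ultimately show ?thesis using e True by simp
    next
      case False
      have "norm x \<le> N j z" using N_ge[OF e(2)] e by simp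
      thus ?thesis using phx[of x] e False by simp
    qed
  qed simp
  have sq: "(\<lambda>j. ((if j = k then 1 else 0)::real)\<^sup>2) = (\<lambda>j. if j = k then (\<lambda>_. 1) j else 0)" by auto
  have ss: "(\<lambda>j. ((if j = k then 1 else 0)::real)\<^sup>2) sums 1" unfolding sq using sums_single[of k "\<lambda>_. (1::real)"] by simp
  show ?A unfolding LambdaSet_iff
    using bl bf dn sums_summable[OF ss] sums_unique[OF ss] by auto
  assume zk: "zs k \<in> Y k"
  have fe: "(\<lambda>j. (if j = k then 1 else 0) * (if j = k then (\<lambda>y. \<phi> (0, y)) else (\<lambda>_. 0)) (zs j))
      = (\<lambda>j. if j = k then (\<lambda>_. \<phi> (0, zs k)) j else 0)" by auto
  have "(\<Sum>j. (if j = k then 1 else 0) * (if j = k then (\<lambda>y. \<phi> (0, y)) else (\<lambda>_. 0)) (zs j)) = \<phi> (0, zs k)"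
    unfolding fe using sums_unique[OF sums_single[of k "\<lambda>_. \<phi> (0, zs k)"]] by simp
  moreover have "\<phi> ((x, 0) + (0, zs k)) = \<phi> (x, 0) + \<phi> (0, zs k)"
    using lin_add[OF phl x0V[of x], of "(0, zs k)"] zk by simp
  ultimately show ?B unfolding lam_apply_simp by simp
qed

lemma norming:
  assumes y: "y \<in> Y k"
  shows "\<exists>\<phi>. linear_on (UNIV \<times> Y k) \<phi> \<and> (\<forall>z\<in>UNIV \<times> Y k. \<bar>\<phi> z\<bar> \<le> N k z) \<and> \<phi> (x, y) = N k (x, y)"
proof -
  have "\<exists>f. linear_on (UNIV \<times> Y k) f \<and> (\<forall>z\<in>UNIV \<times> Y k. f z \<le> N k z) \<and> f (x, y) = N k (x, y)"
  proof (rule HB_point[OF Vsub])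
    show "N k (u + v) \<le> N k u + N k v" if "u \<in> UNIV \<times> Y k" "v \<in> UNIV \<times> Y k" for u v
      by (rule norm_on_tri[OF Nn that])
    show "N k (c *\<^sub>R u) = c * N k u" if "u \<in> UNIV \<times> Y k" "0 \<le> c" for u c
      using norm_on_scale[OF Nn that(1), of c] that(2) by simp
    show "(x, y) \<in> UNIV \<times> Y k" using y by simp
  qed
  then obtain f where fl: "linear_on (UNIV \<times> Y k) f" and fb: "\<forall>z\<in>UNIV \<times> Y k. f z \<le> N k z"
    and fv: "f (x, y) = N k (x, y)" by blast
  have "\<bar>f z\<bar> \<le> N k z" if z: "z \<in> UNIV \<times> Y k" for z
  proof -
    have mz: "- z \<in> UNIV \<times> Y k" using subspace_neg[OF Vsub z] .
    have "f ((-1) *\<^sub>R z) = (-1) * f z" by (rule lin_scale[OF fl z])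
    hence "- f z = f (- z)" by simp
    also have "\<dots> \<le> N k (- z)" by (rule bspec[OF fb mz])
    also have "\<dots> = N k z" by (rule norm_on_neg[OF Nn z])
    finally have "- f z \<le> N k z" .
    moreover have "f z \<le> N k z" by (rule bspec[OF fb z])
    ultimately show ?thesis by (simp add: abs_le_iff)
  qed
  thus ?thesis using fl fv by blast
qed

lemma SN_upper:
  assumes l: "l \<in> LambdaSet Y ny N" and z: "z \<in> SigmaSp Y ny"
  shows "\<bar>lam_apply l z\<bar> \<le> sigma_norm Y ny N z"
proof -
  obtain x zs where ze: "z = (x, zs)" by (cases z)
  have "bdd_above {\<bar>lam_apply l z\<bar> | l. l \<in> LambdaSet Y ny N}"
    unfolding bdd_above_def
  proof (intro exI[of _ "norm x + (1 + (\<Sum>j. (ny j (zs j))\<^sup>2)) / 2"] ballI)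
    fix t assume "t \<in> {\<bar>lam_apply l z\<bar> | l. l \<in> LambdaSet Y ny N}"
    then obtain l' where l': "l' \<in> LambdaSet Y ny N" "t = \<bar>lam_apply l' z\<bar>" by blast
    obtain xs yss \<alpha> where le: "l' = (xs, yss, \<alpha>)" by (cases l')
    show "t \<le> norm x + (1 + (\<Sum>j. (ny j (zs j))\<^sup>2)) / 2"
      using Lam_sum[of xs yss \<alpha> x zs] l' le z ze by simp
  qed
  moreover have "\<bar>lam_apply l z\<bar> \<in> {\<bar>lam_apply l z\<bar> | l. l \<in> LambdaSet Y ny N}" using l by blast
  ultimately show ?thesis unfolding sigma_norm_def by (rule cSup_upper[rotated])
qed

lemma Lam_ne: "LambdaSet Y ny N \<noteq> {}"
proof -
  have "linear_on (UNIV \<times> Y 0) (\<lambda>_. 0)" unfolding linear_on_def by simp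
  moreover have "\<forall>z\<in>UNIV \<times> Y 0. \<bar>(0::real)\<bar> \<le> N 0 z" using norm_on_nonneg[OF Nn] by simp
  ultimately show ?thesis using construct(1)[of 0 "\<lambda>_. 0"] by blast
qed

lemma SN_least:
  assumes "\<And>l. l \<in> LambdaSet Y ny N \<Longrightarrow> \<bar>lam_apply l z\<bar> \<le> B"
  shows "sigma_norm Y ny N z \<le> B"
  unfolding sigma_norm_def using Lam_ne assms by (intro cSup_least) auto

lemma SN_N:
  assumes z: "(x, zs) \<in> SigmaSp Y ny"
  shows "N k (x, zs k) \<le> sigma_norm Y ny N (x, zs)"
proof -
  have zk: "zs k \<in> Y k" using z unfolding SigmaSp_iff by blast
  obtain \<phi> where phl: "linear_on (UNIV \<times> Y k) \<phi>" and phb: "\<forall>z\<in>UNIV \<times> Y k. \<bar>\<phi> z\<bar> \<le> N k z"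
    and phv: "\<phi> (x, zs k) = N k (x, zs k)" using norming[OF zk] by blast
  have "\<bar>\<phi> (x, zs k)\<bar> \<le> sigma_norm Y ny N (x, zs)"
    using SN_upper[OF construct(1)[OF phl phb] z] construct(2)[where zs=zs and x=x, OF phl phb zk] by simp
  thus ?thesis using phv by simp
qed

lemma SN_norm:
  assumes z: "(x, zs) \<in> SigmaSp Y ny"
  shows "norm x \<le> sigma_norm Y ny N (x, zs)"
proof -
  have "zs 0 \<in> Y 0" using z unfolding SigmaSp_iff by blast
  thus ?thesis using N_ge[of "zs 0" 0 x] SN_N[OF z, of 0] by linarith
qed

end


lemma dual_nonneg:
  assumes S: "subspace S" and n: "is_norm_on S n" and F: "linear_on S F"
    and K: "\<forall>z\<in>S. \<bar>F z\<bar> \<le> K * n z"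
  shows "0 \<le> dual_norm S n F"
proof -
  define D where "D = {\<bar>F z\<bar> | z. z \<in> S \<and> n z \<le> 1}"
  have bdd: "bdd_above D" unfolding bdd_above_def D_def
  proof (intro exI[of _ "\<bar>K\<bar>"] ballI)
    fix d assume "d \<in> {\<bar>F z\<bar> |z. z \<in> S \<and> n z \<le> 1}"
    then obtain u where u: "u \<in> S" "n u \<le> 1" "d = \<bar>F u\<bar>" by blast
    have "d \<le> K * n u" using K u(1) u(3) by blast
    also have "K * n u \<le> \<bar>K\<bar> * n u" using norm_on_nonneg[OF n u(1)] by (simp add: mult_right_mono)
    also have "\<dots> \<le> \<bar>K\<bar>" by (rule mult_left_le[OF u(2)]) simp
    finally show "d \<le> \<bar>K\<bar>" .
  qed
  have "0 \<in> S" by (rule subspace_0[OF S])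
  hence "\<bar>F 0\<bar> \<in> D" unfolding D_def using norm_on_zero[OF n S] by auto
  hence "\<bar>F 0\<bar> \<le> Sup D" using bdd by (rule cSup_upper)
  thus ?thesis unfolding dual_norm_def D_def[symmetric] by simp
qed

context l2s begin

lemma F_props:
  assumes xs: "bounded_linear xs" and bf: "bounded_functional_on (Y j) (ny j) ys"
  shows "linear_on (UNIV \<times> Y j) (\<lambda>(x, y). xs x + ys y)"
    and "\<exists>K. \<forall>z\<in>UNIV \<times> Y j. \<bar>(\<lambda>(x, y). xs x + ys y) z\<bar> \<le> K * N j z"
proof -
  have yl: "linear_on (Y j) ys" and "\<exists>C. \<forall>y\<in>Y j. \<bar>ys y\<bar> \<le> C * ny j y"
    using bf unfolding bounded_functional_on_def by blast+
  then obtain C where C: "\<And>y. y \<in> Y j \<Longrightarrow> \<bar>ys y\<bar> \<le> C * ny j y" by blast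
  obtain K0 where K0: "\<And>x. norm (xs x) \<le> norm x * K0" "K0 > 0"
    using bounded_linear.pos_bounded[OF xs] by blast
  have xl: "linear xs" using xs by (rule bounded_linear.linear)
  define F where "F = (\<lambda>(x, y). xs x + ys y)"
  show "linear_on (UNIV \<times> Y j) (\<lambda>(x, y). xs x + ys y)" unfolding linear_on_def
  proof (intro ballI allI)
    fix z z' :: "'x \<times> 'y" and a b :: real
    assume "z \<in> UNIV \<times> Y j" "z' \<in> UNIV \<times> Y j"
    then obtain x1 y1 x2 y2 where e: "z = (x1, y1)" "z' = (x2, y2)" "y1 \<in> Y j" "y2 \<in> Y j" by auto
    have "ys (a *\<^sub>R y1 + b *\<^sub>R y2) = a * ys y1 + b * ys y2"
      using yl e(3,4) unfolding linear_on_def by blast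
    moreover have "xs (a *\<^sub>R x1 + b *\<^sub>R x2) = a * xs x1 + b * xs x2"
      using linear_add[OF xl] linear_scale[OF xl] by simp
    ultimately show "(\<lambda>(x, y). xs x + ys y) (a *\<^sub>R z + b *\<^sub>R z') = a * (\<lambda>(x, y). xs x + ys y) z + b * (\<lambda>(x, y). xs x + ys y) z'"
      unfolding e by (simp add: algebra_simps)
  qed
  have "\<forall>z\<in>UNIV \<times> Y j. \<bar>F z\<bar> \<le> (K0 + 2 * \<bar>C\<bar>) * N j z"
  proof
    fix z :: "'x \<times> 'y" assume "z \<in> UNIV \<times> Y j"
    then obtain x1 y1 where e: "z = (x1, y1)" "y1 \<in> Y j" by auto
    have n1: "\<bar>xs x1\<bar> \<le> K0 * N j (x1, y1)"
      using K0(1)[of x1] N_ge[OF e(2), of x1] K0(2) by (smt (verit) mult.commute mult_left_mono real_norm_def)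
    have "\<bar>ys y1\<bar> \<le> C * ny j y1" by (rule C[OF e(2)])
    also have "\<dots> \<le> \<bar>C\<bar> * ny j y1" using norm_on_nonneg[OF Yn e(2)] by (simp add: mult_right_mono)
    also have "\<dots> \<le> \<bar>C\<bar> * (2 * N j (x1, y1))" using ny_le_N[OF e(2), of x1] by (simp add: mult_left_mono)
    finally have n2: "\<bar>ys y1\<bar> \<le> 2 * \<bar>C\<bar> * N j (x1, y1)" by simp
    have "\<bar>F z\<bar> \<le> \<bar>xs x1\<bar> + \<bar>ys y1\<bar>" unfolding F_def e by simp
    also have "\<dots> \<le> K0 * N j (x1, y1) + 2 * \<bar>C\<bar> * N j (x1, y1)" using n1 n2 by linarith
    also have "\<dots> = (K0 + 2 * \<bar>C\<bar>) * N j z" unfolding e by (simp add: algebra_simps)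
    finally show "\<bar>F z\<bar> \<le> (K0 + 2 * \<bar>C\<bar>) * N j z" .
  qed
  thus "\<exists>K. \<forall>z\<in>UNIV \<times> Y j. \<bar>(\<lambda>(x, y). xs x + ys y) z\<bar> \<le> K * N j z" unfolding F_def by blast
qed

lemma single_Sigma:
  assumes y: "y \<in> Y k"
  shows "(x, (\<lambda>j. if j = k then y else 0)) \<in> SigmaSp Y ny"
proof -
  have "(\<lambda>j. (ny j (if j = k then y else 0))\<^sup>2) = (\<lambda>j. if j = k then (\<lambda>_. (ny k y)\<^sup>2) j else 0)"
    using ny0 by auto
  hence "summable (\<lambda>j. (ny j (if j = k then y else 0))\<^sup>2)"
    using sums_summable[OF sums_single[of k "\<lambda>_. (ny k y)\<^sup>2"]] by simp
  moreover have "\<forall>j. (if j = k then y else 0) \<in> Y j" using y Y0 by auto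
  ultimately show ?thesis unfolding SigmaSp_iff by blast
qed

lemma part1:
  assumes y: "y \<in> Y k"
  shows "sigma_norm Y ny N (x, (\<lambda>j. if j = k then y else 0)) = N k (x, y)"
proof (rule order.antisym)
  show "sigma_norm Y ny N (x, (\<lambda>j. if j = k then y else 0)) \<le> N k (x, y)"
  proof (rule SN_least)
    fix l assume l: "l \<in> LambdaSet Y ny N"
    obtain xs yss \<alpha> where le: "l = (xs, yss, \<alpha>)" by (cases l)
    have l': "(xs, yss, \<alpha>) \<in> LambdaSet Y ny N" using l le by simp
    have a01: "0 \<le> \<alpha> k" "\<alpha> k \<le> 1" using l' unfolding LambdaSet_iff by blast+
    have fe: "(\<lambda>j. \<alpha> j * yss j (if j = k then y else 0)) = (\<lambda>j. if j = k then (\<lambda>_. \<alpha> k * yss k y) j else 0)"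
      using Lam_yss0[OF l'] by auto
    have sm: "(\<Sum>j. \<alpha> j * yss j (if j = k then y else 0)) = \<alpha> k * yss k y"
      unfolding fe using sums_unique[OF sums_single[of k "\<lambda>_. \<alpha> k * yss k y"]] by simp
    define A where "A = xs x + yss k y"
    define B where "B = xs x"
    have hA: "\<bar>A\<bar> \<le> N k (x, y)" unfolding A_def by (rule Lam_F_le[OF l' y])
    have hB: "\<bar>B\<bar> \<le> N k (x, y)" unfolding B_def using Lam_xs[OF l', of x] N_ge[OF y, of x] by linarith
    have "lam_apply l (x, (\<lambda>j. if j = k then y else 0)) = \<alpha> k * A + (1 - \<alpha> k) * B"
      unfolding le lam_apply_simp sm A_def B_def by (simp add: algebra_simps)
    also have "\<bar>\<alpha> k * A + (1 - \<alpha> k) * B\<bar> \<le> \<bar>\<alpha> k * A\<bar> + \<bar>(1 - \<alpha> k) * B\<bar>" by (rule abs_triangle_ineq)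
    also have "\<bar>\<alpha> k * A\<bar> = \<alpha> k * \<bar>A\<bar>" using a01 by (simp add: abs_mult)
    also have "\<bar>(1 - \<alpha> k) * B\<bar> = (1 - \<alpha> k) * \<bar>B\<bar>" using a01 by (simp add: abs_mult)
    also have "\<alpha> k * \<bar>A\<bar> + (1 - \<alpha> k) * \<bar>B\<bar> \<le> \<alpha> k * N k (x, y) + (1 - \<alpha> k) * N k (x, y)"
      using hA hB a01 by (intro add_mono mult_left_mono) auto
    also have "\<dots> = N k (x, y)" by (simp add: algebra_simps)
    finally show "\<bar>lam_apply l (x, \<lambda>j. if j = k then y else 0)\<bar> \<le> N k (x, y)" .
  qed
  show "N k (x, y) \<le> sigma_norm Y ny N (x, (\<lambda>j. if j = k then y else 0))"
    using SN_N[OF single_Sigma[OF y, where x=x], where k=k] by simp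
qed

lemma zero_Sigma: "(x, (\<lambda>_. 0)) \<in> SigmaSp Y ny" and zero_SN: "sigma_norm Y ny N (x, (\<lambda>_. 0)) = norm x"
proof -
  have e: "(\<lambda>j. if j = 0 then (0::'y) else 0) = (\<lambda>_. 0)" by simp
  show "(x, (\<lambda>_. 0)) \<in> SigmaSp Y ny" using single_Sigma[OF Y0, where k=0 and x=x] unfolding e .
  show "sigma_norm Y ny N (x, (\<lambda>_. 0)) = norm x" using part1[OF Y0, where k=0 and x=x] N_x0 unfolding e by simp
qed

lemma part2:
  assumes xs: "bounded_linear xs" and bf: "bounded_functional_on (Y k) (ny k) ys"
  shows "sigma_dual_norm Y ny N (\<lambda>(x, zs). xs x + ys (zs k))
             = dual_norm (UNIV \<times> Y k) (N k) (\<lambda>(x, y). xs x + ys y)"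
proof -
  define f where "f = (\<lambda>(x, y). xs x + ys y)"
  define d where "d = dual_norm (UNIV \<times> Y k) (N k) f"
  have fl: "linear_on (UNIV \<times> Y k) f" unfolding f_def by (rule F_props(1)[OF xs bf])
  obtain K where K: "\<forall>z\<in>UNIV \<times> Y k. \<bar>f z\<bar> \<le> K * N k z" using F_props(2)[OF xs bf] unfolding f_def by blast
  have fb: "\<bar>f z\<bar> \<le> d * N k z" if "z \<in> UNIV \<times> Y k" for z
    unfolding d_def by (rule dual_bound[OF Vsub Nn fl K that])
  have d0: "0 \<le> d" unfolding d_def by (rule dual_nonneg[OF Vsub Nn fl K])
  define R where "R = {\<bar>(\<lambda>(x, zs). xs x + ys (zs k)) z\<bar> | z. z \<in> SigmaSp Y ny \<and> sigma_norm Y ny N z \<le> 1}"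
  have Rle: "r \<le> d" if rR: "r \<in> R" for r
  proof -
    obtain z where z: "z \<in> SigmaSp Y ny" "sigma_norm Y ny N z \<le> 1" "r = \<bar>(\<lambda>(x, zs). xs x + ys (zs k)) z\<bar>"
      using rR unfolding R_def by blast
    obtain x zs where ze: "z = (x, zs)" by (cases z)
    have "(x, zs) \<in> SigmaSp Y ny" using z(1) ze by simp
    hence zk: "zs k \<in> Y k" unfolding SigmaSp_iff by blast
    have "r = \<bar>f (x, zs k)\<bar>" using z(3) ze unfolding f_def by simp
    also have "\<dots> \<le> d * N k (x, zs k)" using fb zk by simp
    also have "\<dots> \<le> d * sigma_norm Y ny N z" using SN_N[where x=x and zs=zs and k=k] z(1) ze d0 by (simp add: mult_left_mono)
    also have "\<dots> \<le> d * 1" using z(2) d0 by (rule mult_left_mono)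
    finally show ?thesis by simp
  qed
  have mem: "\<bar>(\<lambda>(x, zs). xs x + ys (zs k)) z\<bar> \<in> R" if "z \<in> SigmaSp Y ny" "sigma_norm Y ny N z \<le> 1" for z
    unfolding R_def using that by blast
  have R0: "\<bar>(\<lambda>(x, zs). xs x + ys (zs k)) (0, \<lambda>_. 0)\<bar> \<in> R"
    by (rule mem) (use zero_Sigma[of 0] zero_SN[of 0] in auto)
  have Rne: "R \<noteq> {}" using R0 by blast
  have Rbdd: "bdd_above R" unfolding bdd_above_def using Rle by blast
  have "Sup R \<le> d" using Rne Rle by (rule cSup_least)
  moreover have "d \<le> Sup R"
    unfolding d_def dual_norm_def
  proof (rule cSup_least)
    have "(0::'x, 0::'y) \<in> UNIV \<times> Y k \<and> N k (0, 0) \<le> 1" using Y0[of k] N_x0[of k 0] by simp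
    hence "\<bar>f (0, 0)\<bar> \<in> {\<bar>f z\<bar> |z. z \<in> UNIV \<times> Y k \<and> N k z \<le> 1}" by blast
    thus "{\<bar>f z\<bar> |z. z \<in> UNIV \<times> Y k \<and> N k z \<le> 1} \<noteq> {}" by blast
  next
    fix t assume "t \<in> {\<bar>f z\<bar> |z. z \<in> UNIV \<times> Y k \<and> N k z \<le> 1}"
    then obtain x y where xy: "y \<in> Y k" "N k (x, y) \<le> 1" "t = \<bar>f (x, y)\<bar>" by blast
    have "\<bar>(\<lambda>(x, zs). xs x + ys (zs k)) (x, (\<lambda>j. if j = k then y else 0))\<bar> \<in> R"
      by (rule mem) (use single_Sigma[OF xy(1), of x] part1[OF xy(1), of x] xy(2) in auto)
    moreover have "\<bar>(\<lambda>(x, zs). xs x + ys (zs k)) (x, (\<lambda>j. if j = k then y else 0))\<bar> = t"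
      using xy(3) unfolding f_def by simp
    ultimately show "t \<le> Sup R" using Rbdd by (auto intro: cSup_upper)
  qed
  ultimately have "Sup R = d" by simp
  thus ?thesis unfolding sigma_dual_norm_def dual_norm_def R_def d_def f_def .
qed

lemma part3:
  assumes xs: "bounded_linear xs"
  shows "sigma_dual_norm Y ny N (\<lambda>(x, zs). xs x) = onorm xs"
proof -
  define R where "R = {\<bar>(\<lambda>(x, zs). xs x) z\<bar> | z. z \<in> SigmaSp Y ny \<and> sigma_norm Y ny N z \<le> 1}"
  have o0: "0 \<le> onorm xs" by (rule onorm_pos_le[OF xs])
  have xl: "linear xs" using xs by (rule bounded_linear.linear)
  have Rle: "r \<le> onorm xs" if rR: "r \<in> R" for r
  proof -
    obtain z where z: "z \<in> SigmaSp Y ny" "sigma_norm Y ny N z \<le> 1" "r = \<bar>(\<lambda>(x, zs). xs x) z\<bar>"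
      using rR unfolding R_def by blast
    obtain x zs where ze: "z = (x, zs)" by (cases z)
    have "r = norm (xs x)" using z(3) ze by simp
    also have "\<dots> \<le> onorm xs * norm x" by (rule onorm[OF xs])
    also have "\<dots> \<le> onorm xs * sigma_norm Y ny N z" using SN_norm[where x=x and zs=zs] z(1) ze o0 by (simp add: mult_left_mono)
    also have "\<dots> \<le> onorm xs * 1" using z(2) o0 by (rule mult_left_mono)
    finally show ?thesis by simp
  qed
  have mem: "\<bar>(\<lambda>(x, zs). xs x) z\<bar> \<in> R" if "z \<in> SigmaSp Y ny" "sigma_norm Y ny N z \<le> 1" for z
    unfolding R_def using that by blast
  have R0: "\<bar>(\<lambda>(x, zs). xs x) (0, \<lambda>_. 0)\<bar> \<in> R"
    using mem[of "(0, \<lambda>_. 0)"] zero_Sigma[of 0] zero_SN[of 0] by simp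
  have Rne: "R \<noteq> {}" using R0 by blast
  have Rbdd: "bdd_above R" unfolding bdd_above_def using Rle by blast
  have "Sup R \<le> onorm xs" using Rne Rle by (rule cSup_least)
  moreover have "onorm xs \<le> Sup R"
  proof (rule onorm_bound)
    have "\<bar>(\<lambda>(x, zs). xs x) (0, \<lambda>_. 0)\<bar> \<le> Sup R" using R0 Rbdd by (rule cSup_upper)
    thus S0: "0 \<le> Sup R" by simp
    fix x :: 'x
    show "norm (xs x) \<le> Sup R * norm x"
    proof (cases "x = 0")
      case True thus ?thesis using linear_0[OF xl] by simp
    next
      case False
      hence pos: "norm x > 0" by simp
      define x' where "x' = (1 / norm x) *\<^sub>R x"
      have "norm x' = 1" unfolding x'_def using pos by simp
      hence "\<bar>(\<lambda>(x, zs). xs x) (x', \<lambda>_. 0)\<bar> \<in> R"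
        using mem[of "(x', \<lambda>_. 0)"] zero_Sigma[of x'] zero_SN[of x'] by simp
      hence "\<bar>xs x'\<bar> \<le> Sup R" using Rbdd cSup_upper by fastforce
      moreover have "xs x' = xs x / norm x" unfolding x'_def using linear_scale[OF xl] by simp
      ultimately have "norm (xs x) / norm x \<le> Sup R" by simp
      thus ?thesis using pos_divide_le_eq[OF pos] by blast
    qed
  qed
  ultimately have "Sup R = onorm xs" by simp
  thus ?thesis unfolding sigma_dual_norm_def dual_norm_def R_def .
qed

end

theorem proposition2p4:
  fixes Y :: "nat \<Rightarrow> 'y::real_vector set"
    and ny :: "nat \<Rightarrow> 'y \<Rightarrow> real"
    and N :: "nat \<Rightarrow> ('x::banach \<times> 'y) \<Rightarrow> real"
    and k :: nat
  assumes setting: "l2sum_setting Y ny N"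
  shows "(\<forall>x. \<forall>y\<in>Y k.
           sigma_norm Y ny N (x, (\<lambda>j. if j = k then y else 0)) = N k (x, y)) \<and>
         (\<forall>xs ys. bounded_linear xs \<and> bounded_functional_on (Y k) (ny k) ys \<longrightarrow>
           sigma_dual_norm Y ny N (\<lambda>(x, zs). xs x + ys (zs k))
             = dual_norm (UNIV \<times> Y k) (N k) (\<lambda>(x, y). xs x + ys y)) \<and>
         (\<forall>xs. bounded_linear xs \<longrightarrow>
           sigma_dual_norm Y ny N (\<lambda>(x, zs). xs x) = onorm xs)"
proof -
  interpret l2s Y ny N by (rule l2s.intro[OF setting])
  show ?thesis using part1 part2 part3 by blast
qed

end
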